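(* Let $C$ be a globularily generated double category and let $\Phi,\Psi$ be horizontally composable 2-morphisms of $C$ (i.e. $t\Phi=s\Psi$). Then the horizontal composite $\Psi\ast\Phi$ is globular if and only if both $\Phi$ and $\Psi$ are globular.
   Context: Double categories are not assumed strict: $C_0$ (objects and vertical morphisms), $C_1$ (horizontal morphisms and 2-morphisms), source and target functors $s,t:C_1\to C_0$, horizontal identity $i$, horizontal composition $\ast$, with unitor and associator components globular. A 2-morphism $\Phi$ is globular if $s\Phi$ and $t\Phi$ are identity vertical morphisms. $C$ is globularily generated if the smallest sub-double category of $C$ containing all objects, vertical morphisms, horizontal morphisms and globular 2-morphisms of $C$ is $C$ itself. *)

theory Defs
  imports Main
begin

text \<open>A (not necessarily strict, i.e. pseudo) double category, given by explicit data.
  C0: objects Ob, vertical morphisms VM (composition vcomp g f = g o f).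
  C1: horizontal morphisms HM as objects, 2-morphisms TM as morphisms
      (vertical composition mcomp Y X = Y o X, identities mid).
  Source/target functors s,t : C1 -> C0 are (hsrc,msrc), (htgt,mtgt).
  Horizontal identity functor i : C0 -> C1 is (hunit, munit).
  Horizontal composition: hhcomp k h = k * h (defined when htgt h = hsrc k),
      mhcomp Y X = Y * X (defined when mtgt X = msrc Y).\<close>

record ('o,'v,'h,'m) dcat =
  Ob :: "'o set"
  VM :: "'v set"
  vdom :: "'v \<Rightarrow> 'o"
  vcod :: "'v \<Rightarrow> 'o"
  vcomp :: "'v \<Rightarrow> 'v \<Rightarrow> 'v"
  vid :: "'o \<Rightarrow> 'v"
  HM :: "'h set"
  TM :: "'m set"
  mdom :: "'m \<Rightarrow> 'h"
  mcod :: "'m \<Rightarrow> 'h"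
  mcomp :: "'m \<Rightarrow> 'm \<Rightarrow> 'm"
  mid :: "'h \<Rightarrow> 'm"
  hsrc :: "'h \<Rightarrow> 'o"
  htgt :: "'h \<Rightarrow> 'o"
  msrc :: "'m \<Rightarrow> 'v"
  mtgt :: "'m \<Rightarrow> 'v"
  hunit :: "'o \<Rightarrow> 'h"
  munit :: "'v \<Rightarrow> 'm"
  hhcomp :: "'h \<Rightarrow> 'h \<Rightarrow> 'h"
  mhcomp :: "'m \<Rightarrow> 'm \<Rightarrow> 'm"
  lunit :: "'h \<Rightarrow> 'm"
  runit :: "'h \<Rightarrow> 'm"
  assoc :: "'h \<Rightarrow> 'h \<Rightarrow> 'h \<Rightarrow> 'm"

definition category ::
  "'a set \<Rightarrow> 'b set \<Rightarrow> ('b \<Rightarrow> 'a) \<Rightarrow> ('b \<Rightarrow> 'a) \<Rightarrow> ('b \<Rightarrow> 'b \<Rightarrow> 'b) \<Rightarrow> ('a \<Rightarrow> 'b) \<Rightarrow> bool" where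
  "category Obs M dm cd cmp ident \<longleftrightarrow>
     (\<forall>f\<in>M. dm f \<in> Obs \<and> cd f \<in> Obs) \<and>
     (\<forall>a\<in>Obs. ident a \<in> M \<and> dm (ident a) = a \<and> cd (ident a) = a) \<and>
     (\<forall>f\<in>M. \<forall>g\<in>M. dm g = cd f \<longrightarrow>
        cmp g f \<in> M \<and> dm (cmp g f) = dm f \<and> cd (cmp g f) = cd g) \<and>
     (\<forall>f\<in>M. cmp (ident (cd f)) f = f \<and> cmp f (ident (dm f)) = f) \<and>
     (\<forall>f\<in>M. \<forall>g\<in>M. \<forall>h\<in>M. dm g = cd f \<longrightarrow> dm h = cd g \<longrightarrow>
        cmp h (cmp g f) = cmp (cmp h g) f)"

definition is_minv :: "('o,'v,'h,'m,'z) dcat_scheme \<Rightarrow> 'm \<Rightarrow> 'm \<Rightarrow> bool" where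
  "is_minv C X Y \<longleftrightarrow> Y \<in> TM C \<and> mdom C Y = mcod C X \<and> mcod C Y = mdom C X \<and>
     mcomp C Y X = mid C (mdom C X) \<and> mcomp C X Y = mid C (mcod C X)"

definition miso :: "('o,'v,'h,'m,'z) dcat_scheme \<Rightarrow> 'm \<Rightarrow> bool" where
  "miso C X \<longleftrightarrow> X \<in> TM C \<and> (\<exists>Y. is_minv C X Y)"

definition is_vid :: "('o,'v,'h,'m,'z) dcat_scheme \<Rightarrow> 'v \<Rightarrow> bool" where
  "is_vid C f \<longleftrightarrow> (\<exists>a\<in>Ob C. f = vid C a)"

definition globular :: "('o,'v,'h,'m,'z) dcat_scheme \<Rightarrow> 'm \<Rightarrow> bool" where
  "globular C X \<longleftrightarrow> is_vid C (msrc C X) \<and> is_vid C (mtgt C X)"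

definition double_category :: "('o,'v,'h,'m,'z) dcat_scheme \<Rightarrow> bool" where
  "double_category C \<longleftrightarrow>
    \<comment> \<open>C0 and C1 are categories\<close>
    category (Ob C) (VM C) (vdom C) (vcod C) (vcomp C) (vid C) \<and>
    category (HM C) (TM C) (mdom C) (mcod C) (mcomp C) (mid C) \<and>
    \<comment> \<open>source functor s : C1 -> C0\<close>
    (\<forall>h\<in>HM C. hsrc C h \<in> Ob C) \<and>
    (\<forall>X\<in>TM C. msrc C X \<in> VM C \<and> vdom C (msrc C X) = hsrc C (mdom C X)
                \<and> vcod C (msrc C X) = hsrc C (mcod C X)) \<and>
    (\<forall>X\<in>TM C. \<forall>Y\<in>TM C. mdom C Y = mcod C X \<longrightarrow>
        msrc C (mcomp C Y X) = vcomp C (msrc C Y) (msrc C X)) \<and>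
    (\<forall>h\<in>HM C. msrc C (mid C h) = vid C (hsrc C h)) \<and>
    \<comment> \<open>target functor t : C1 -> C0\<close>
    (\<forall>h\<in>HM C. htgt C h \<in> Ob C) \<and>
    (\<forall>X\<in>TM C. mtgt C X \<in> VM C \<and> vdom C (mtgt C X) = htgt C (mdom C X)
                \<and> vcod C (mtgt C X) = htgt C (mcod C X)) \<and>
    (\<forall>X\<in>TM C. \<forall>Y\<in>TM C. mdom C Y = mcod C X \<longrightarrow>
        mtgt C (mcomp C Y X) = vcomp C (mtgt C Y) (mtgt C X)) \<and>
    (\<forall>h\<in>HM C. mtgt C (mid C h) = vid C (htgt C h)) \<and>
    \<comment> \<open>horizontal identity functor i : C0 -> C1, with s i = t i = id\<close>
    (\<forall>a\<in>Ob C. hunit C a \<in> HM C \<and> hsrc C (hunit C a) = a \<and> htgt C (hunit C a) = a) \<and>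
    (\<forall>f\<in>VM C. munit C f \<in> TM C \<and> mdom C (munit C f) = hunit C (vdom C f)
                \<and> mcod C (munit C f) = hunit C (vcod C f)
                \<and> msrc C (munit C f) = f \<and> mtgt C (munit C f) = f) \<and>
    (\<forall>f\<in>VM C. \<forall>g\<in>VM C. vdom C g = vcod C f \<longrightarrow>
        munit C (vcomp C g f) = mcomp C (munit C g) (munit C f)) \<and>
    (\<forall>a\<in>Ob C. munit C (vid C a) = mid C (hunit C a)) \<and>
    \<comment> \<open>horizontal composition functor * : C1 x_C0 C1 -> C1\<close>
    (\<forall>h\<in>HM C. \<forall>k\<in>HM C. htgt C h = hsrc C k \<longrightarrow>
        hhcomp C k h \<in> HM C \<and> hsrc C (hhcomp C k h) = hsrc C h
        \<and> htgt C (hhcomp C k h) = htgt C k) \<and>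
    (\<forall>X\<in>TM C. \<forall>Y\<in>TM C. mtgt C X = msrc C Y \<longrightarrow>
        mhcomp C Y X \<in> TM C
        \<and> mdom C (mhcomp C Y X) = hhcomp C (mdom C Y) (mdom C X)
        \<and> mcod C (mhcomp C Y X) = hhcomp C (mcod C Y) (mcod C X)
        \<and> msrc C (mhcomp C Y X) = msrc C X
        \<and> mtgt C (mhcomp C Y X) = mtgt C Y) \<and>
    (\<forall>h\<in>HM C. \<forall>k\<in>HM C. htgt C h = hsrc C k \<longrightarrow>
        mhcomp C (mid C k) (mid C h) = mid C (hhcomp C k h)) \<and>
    (\<forall>X\<in>TM C. \<forall>X'\<in>TM C. \<forall>Y\<in>TM C. \<forall>Y'\<in>TM C.
        mdom C X' = mcod C X \<longrightarrow> mdom C Y' = mcod C Y \<longrightarrow>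
        mtgt C X = msrc C Y \<longrightarrow> mtgt C X' = msrc C Y' \<longrightarrow>
        mhcomp C (mcomp C Y' Y) (mcomp C X' X) = mcomp C (mhcomp C Y' X') (mhcomp C Y X)) \<and>
    \<comment> \<open>left unitor: globular natural isomorphism i(t h) * h => h\<close>
    (\<forall>h\<in>HM C. miso C (lunit C h)
        \<and> mdom C (lunit C h) = hhcomp C (hunit C (htgt C h)) h
        \<and> mcod C (lunit C h) = h
        \<and> msrc C (lunit C h) = vid C (hsrc C h)
        \<and> mtgt C (lunit C h) = vid C (htgt C h)) \<and>
    (\<forall>X\<in>TM C. mcomp C X (lunit C (mdom C X))
        = mcomp C (lunit C (mcod C X)) (mhcomp C (munit C (mtgt C X)) X)) \<and>
    \<comment> \<open>right unitor: globular natural isomorphism h * i(s h) => h\<close>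
    (\<forall>h\<in>HM C. miso C (runit C h)
        \<and> mdom C (runit C h) = hhcomp C h (hunit C (hsrc C h))
        \<and> mcod C (runit C h) = h
        \<and> msrc C (runit C h) = vid C (hsrc C h)
        \<and> mtgt C (runit C h) = vid C (htgt C h)) \<and>
    (\<forall>X\<in>TM C. mcomp C X (runit C (mdom C X))
        = mcomp C (runit C (mcod C X)) (mhcomp C X (munit C (msrc C X)))) \<and>
    \<comment> \<open>associator: globular natural isomorphism (k * h) * g => k * (h * g)\<close>
    (\<forall>g\<in>HM C. \<forall>h\<in>HM C. \<forall>k\<in>HM C. htgt C g = hsrc C h \<longrightarrow> htgt C h = hsrc C k \<longrightarrow>
        miso C (assoc C k h g)
        \<and> mdom C (assoc C k h g) = hhcomp C (hhcomp C k h) g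
        \<and> mcod C (assoc C k h g) = hhcomp C k (hhcomp C h g)
        \<and> msrc C (assoc C k h g) = vid C (hsrc C g)
        \<and> mtgt C (assoc C k h g) = vid C (htgt C k)) \<and>
    (\<forall>X\<in>TM C. \<forall>Y\<in>TM C. \<forall>Z\<in>TM C. mtgt C X = msrc C Y \<longrightarrow> mtgt C Y = msrc C Z \<longrightarrow>
        mcomp C (mhcomp C Z (mhcomp C Y X)) (assoc C (mdom C Z) (mdom C Y) (mdom C X))
        = mcomp C (assoc C (mcod C Z) (mcod C Y) (mcod C X)) (mhcomp C (mhcomp C Z Y) X)) \<and>
    \<comment> \<open>pentagon\<close>
    (\<forall>f\<in>HM C. \<forall>g\<in>HM C. \<forall>h\<in>HM C. \<forall>k\<in>HM C.
        htgt C f = hsrc C g \<longrightarrow> htgt C g = hsrc C h \<longrightarrow> htgt C h = hsrc C k \<longrightarrow>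
        mcomp C (assoc C k h (hhcomp C g f)) (assoc C (hhcomp C k h) g f)
        = mcomp C (mhcomp C (mid C k) (assoc C h g f))
            (mcomp C (assoc C k (hhcomp C h g) f) (mhcomp C (assoc C k h g) (mid C f)))) \<and>
    \<comment> \<open>triangle\<close>
    (\<forall>f\<in>HM C. \<forall>g\<in>HM C. htgt C f = hsrc C g \<longrightarrow>
        mcomp C (mhcomp C (mid C g) (lunit C f)) (assoc C g (hunit C (htgt C f)) f)
        = mhcomp C (runit C g) (mid C f))"

definition sub_double_category ::
  "('o,'v,'h,'m,'z) dcat_scheme \<Rightarrow> 'o set \<Rightarrow> 'v set \<Rightarrow> 'h set \<Rightarrow> 'm set \<Rightarrow> bool" where
  "sub_double_category C Os V H M \<longleftrightarrow>
    Os \<subseteq> Ob C \<and> V \<subseteq> VM C \<and> H \<subseteq> HM C \<and> M \<subseteq> TM C \<and>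
    (\<forall>f\<in>V. vdom C f \<in> Os \<and> vcod C f \<in> Os) \<and>
    (\<forall>a\<in>Os. vid C a \<in> V) \<and>
    (\<forall>f\<in>V. \<forall>g\<in>V. vdom C g = vcod C f \<longrightarrow> vcomp C g f \<in> V) \<and>
    (\<forall>h\<in>H. hsrc C h \<in> Os \<and> htgt C h \<in> Os) \<and>
    (\<forall>X\<in>M. mdom C X \<in> H \<and> mcod C X \<in> H \<and> msrc C X \<in> V \<and> mtgt C X \<in> V) \<and>
    (\<forall>h\<in>H. mid C h \<in> M) \<and>
    (\<forall>X\<in>M. \<forall>Y\<in>M. mdom C Y = mcod C X \<longrightarrow> mcomp C Y X \<in> M) \<and>
    (\<forall>a\<in>Os. hunit C a \<in> H) \<and>
    (\<forall>f\<in>V. munit C f \<in> M) \<and>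
    (\<forall>h\<in>H. \<forall>k\<in>H. htgt C h = hsrc C k \<longrightarrow> hhcomp C k h \<in> H) \<and>
    (\<forall>X\<in>M. \<forall>Y\<in>M. mtgt C X = msrc C Y \<longrightarrow> mhcomp C Y X \<in> M) \<and>
    (\<forall>h\<in>H. lunit C h \<in> M \<and> (\<exists>Y\<in>M. is_minv C (lunit C h) Y)) \<and>
    (\<forall>h\<in>H. runit C h \<in> M \<and> (\<exists>Y\<in>M. is_minv C (runit C h) Y)) \<and>
    (\<forall>g\<in>H. \<forall>h\<in>H. \<forall>k\<in>H. htgt C g = hsrc C h \<longrightarrow> htgt C h = hsrc C k \<longrightarrow>
        assoc C k h g \<in> M \<and> (\<exists>Y\<in>M. is_minv C (assoc C k h g) Y))"

text \<open>Globularily generated: the smallest sub-double category containing all objects,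
  vertical morphisms, horizontal morphisms and globular 2-morphisms is C itself,
  i.e. every such sub-double category contains all 2-morphisms.\<close>
definition globularily_generated :: "('o,'v,'h,'m,'z) dcat_scheme \<Rightarrow> bool" where
  "globularily_generated C \<longleftrightarrow>
    (\<forall>Os V H M. sub_double_category C Os V H M \<and> Ob C \<subseteq> Os \<and> VM C \<subseteq> V \<and> HM C \<subseteq> H
        \<and> {X \<in> TM C. globular C X} \<subseteq> M
        \<longrightarrow> Os = Ob C \<and> V = VM C \<and> H = HM C \<and> M = TM C)"

end

theory Submission
  imports Defs
begin

lemma dcD:
  assumes "double_category C"
  shows "category (Ob C) (VM C) (vdom C) (vcod C) (vcomp C) (vid C)"
    "category (HM C) (TM C) (mdom C) (mcod C) (mcomp C) (mid C)"
    "(\<forall>h\<in>HM C. hsrc C h \<in> Ob C)"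
    "(\<forall>X\<in>TM C. msrc C X \<in> VM C \<and> vdom C (msrc C X) = hsrc C (mdom C X)
                \<and> vcod C (msrc C X) = hsrc C (mcod C X))"
    "(\<forall>X\<in>TM C. \<forall>Y\<in>TM C. mdom C Y = mcod C X \<longrightarrow>
        msrc C (mcomp C Y X) = vcomp C (msrc C Y) (msrc C X))"
    "(\<forall>h\<in>HM C. msrc C (mid C h) = vid C (hsrc C h))"
    "(\<forall>h\<in>HM C. htgt C h \<in> Ob C)"
    "(\<forall>X\<in>TM C. mtgt C X \<in> VM C \<and> vdom C (mtgt C X) = htgt C (mdom C X)
                \<and> vcod C (mtgt C X) = htgt C (mcod C X))"
    "(\<forall>X\<in>TM C. \<forall>Y\<in>TM C. mdom C Y = mcod C X \<longrightarrow>
        mtgt C (mcomp C Y X) = vcomp C (mtgt C Y) (mtgt C X))"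
    "(\<forall>h\<in>HM C. mtgt C (mid C h) = vid C (htgt C h))"
    "(\<forall>a\<in>Ob C. hunit C a \<in> HM C \<and> hsrc C (hunit C a) = a \<and> htgt C (hunit C a) = a)"
    "(\<forall>f\<in>VM C. munit C f \<in> TM C \<and> mdom C (munit C f) = hunit C (vdom C f)
                \<and> mcod C (munit C f) = hunit C (vcod C f)
                \<and> msrc C (munit C f) = f \<and> mtgt C (munit C f) = f)"
    "(\<forall>f\<in>VM C. \<forall>g\<in>VM C. vdom C g = vcod C f \<longrightarrow>
        munit C (vcomp C g f) = mcomp C (munit C g) (munit C f))"
    "(\<forall>a\<in>Ob C. munit C (vid C a) = mid C (hunit C a))"
    "(\<forall>h\<in>HM C. \<forall>k\<in>HM C. htgt C h = hsrc C k \<longrightarrow>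
        hhcomp C k h \<in> HM C \<and> hsrc C (hhcomp C k h) = hsrc C h
        \<and> htgt C (hhcomp C k h) = htgt C k)"
    "(\<forall>X\<in>TM C. \<forall>Y\<in>TM C. mtgt C X = msrc C Y \<longrightarrow>
        mhcomp C Y X \<in> TM C
        \<and> mdom C (mhcomp C Y X) = hhcomp C (mdom C Y) (mdom C X)
        \<and> mcod C (mhcomp C Y X) = hhcomp C (mcod C Y) (mcod C X)
        \<and> msrc C (mhcomp C Y X) = msrc C X
        \<and> mtgt C (mhcomp C Y X) = mtgt C Y)"
    "(\<forall>h\<in>HM C. \<forall>k\<in>HM C. htgt C h = hsrc C k \<longrightarrow>
        mhcomp C (mid C k) (mid C h) = mid C (hhcomp C k h))"
    "(\<forall>X\<in>TM C. \<forall>X'\<in>TM C. \<forall>Y\<in>TM C. \<forall>Y'\<in>TM C.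
        mdom C X' = mcod C X \<longrightarrow> mdom C Y' = mcod C Y \<longrightarrow>
        mtgt C X = msrc C Y \<longrightarrow> mtgt C X' = msrc C Y' \<longrightarrow>
        mhcomp C (mcomp C Y' Y) (mcomp C X' X) = mcomp C (mhcomp C Y' X') (mhcomp C Y X))"
    "(\<forall>h\<in>HM C. miso C (lunit C h)
        \<and> mdom C (lunit C h) = hhcomp C (hunit C (htgt C h)) h
        \<and> mcod C (lunit C h) = h
        \<and> msrc C (lunit C h) = vid C (hsrc C h)
        \<and> mtgt C (lunit C h) = vid C (htgt C h))"
    "(\<forall>X\<in>TM C. mcomp C X (lunit C (mdom C X))
        = mcomp C (lunit C (mcod C X)) (mhcomp C (munit C (mtgt C X)) X))"
    "(\<forall>h\<in>HM C. miso C (runit C h)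
        \<and> mdom C (runit C h) = hhcomp C h (hunit C (hsrc C h))
        \<and> mcod C (runit C h) = h
        \<and> msrc C (runit C h) = vid C (hsrc C h)
        \<and> mtgt C (runit C h) = vid C (htgt C h))"
    "(\<forall>X\<in>TM C. mcomp C X (runit C (mdom C X))
        = mcomp C (runit C (mcod C X)) (mhcomp C X (munit C (msrc C X))))"
    "(\<forall>g\<in>HM C. \<forall>h\<in>HM C. \<forall>k\<in>HM C. htgt C g = hsrc C h \<longrightarrow> htgt C h = hsrc C k \<longrightarrow>
        miso C (assoc C k h g)
        \<and> mdom C (assoc C k h g) = hhcomp C (hhcomp C k h) g
        \<and> mcod C (assoc C k h g) = hhcomp C k (hhcomp C h g)
        \<and> msrc C (assoc C k h g) = vid C (hsrc C g)
        \<and> mtgt C (assoc C k h g) = vid C (htgt C k))"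
    "(\<forall>X\<in>TM C. \<forall>Y\<in>TM C. \<forall>Z\<in>TM C. mtgt C X = msrc C Y \<longrightarrow> mtgt C Y = msrc C Z \<longrightarrow>
        mcomp C (mhcomp C Z (mhcomp C Y X)) (assoc C (mdom C Z) (mdom C Y) (mdom C X))
        = mcomp C (assoc C (mcod C Z) (mcod C Y) (mcod C X)) (mhcomp C (mhcomp C Z Y) X))"
    "(\<forall>f\<in>HM C. \<forall>g\<in>HM C. \<forall>h\<in>HM C. \<forall>k\<in>HM C.
        htgt C f = hsrc C g \<longrightarrow> htgt C g = hsrc C h \<longrightarrow> htgt C h = hsrc C k \<longrightarrow>
        mcomp C (assoc C k h (hhcomp C g f)) (assoc C (hhcomp C k h) g f)
        = mcomp C (mhcomp C (mid C k) (assoc C h g f))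
            (mcomp C (assoc C k (hhcomp C h g) f) (mhcomp C (assoc C k h g) (mid C f))))"
    "(\<forall>f\<in>HM C. \<forall>g\<in>HM C. htgt C f = hsrc C g \<longrightarrow>
        mcomp C (mhcomp C (mid C g) (lunit C f)) (assoc C g (hunit C (htgt C f)) f)
        = mhcomp C (runit C g) (mid C f))"
  using assms unfolding double_category_def by - (insert assms[unfolded double_category_def], (elim conjE; assumption)+)

definition PP :: "('o,'v,'h,'m,'z) dcat_scheme \<Rightarrow> 'm \<Rightarrow> bool" where
  "PP C X \<longleftrightarrow> (is_vid C (msrc C X) \<and> is_vid C (mtgt C X)) \<or> msrc C X = mtgt C X"

lemma all_PP:
  assumes dc: "double_category C" and gg: "globularily_generated C"
    and X: "X \<in> TM C"
  shows "PP C X"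
proof -
  define M where "M = {X \<in> TM C. PP C X}"
  have c0: "category (Ob C) (VM C) (vdom C) (vcod C) (vcomp C) (vid C)"
    and c1: "category (HM C) (TM C) (mdom C) (mcod C) (mcomp C) (mid C)"
    using dcD(1,2)[OF dc] by auto
  note c0' = c0[unfolded category_def] and c1' = c1[unfolded category_def]
  note c0'' = c0[unfolded category_def]
  note c01 = c0''[THEN conjunct1] and c02 = c0''[THEN conjunct2, THEN conjunct1]
    and c03 = c0''[THEN conjunct2, THEN conjunct2, THEN conjunct1]
    and c04 = c0''[THEN conjunct2, THEN conjunct2, THEN conjunct2, THEN conjunct1]
  note c11 = c1[unfolded category_def, THEN conjunct1]
  note c12 = c1[unfolded category_def, THEN conjunct2, THEN conjunct1]
  note c13 = c1[unfolded category_def, THEN conjunct2, THEN conjunct2, THEN conjunct1]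
  have hs: "\<And>h. h \<in> HM C \<Longrightarrow> hsrc C h \<in> Ob C \<and> htgt C h \<in> Ob C" using dcD(3,7)[OF dc] by blast
  have ms: "\<And>X. X \<in> TM C \<Longrightarrow> msrc C X \<in> VM C \<and> vdom C (msrc C X) = hsrc C (mdom C X)
                \<and> vcod C (msrc C X) = hsrc C (mcod C X)" using dcD(4)[OF dc] by blast
  have mt: "\<And>X. X \<in> TM C \<Longrightarrow> mtgt C X \<in> VM C \<and> vdom C (mtgt C X) = htgt C (mdom C X)
                \<and> vcod C (mtgt C X) = htgt C (mcod C X)" using dcD(8)[OF dc] by blast
  have msc: "\<And>X Y. X\<in>TM C \<Longrightarrow> Y\<in>TM C \<Longrightarrow> mdom C Y = mcod C X \<Longrightarrow>
        msrc C (mcomp C Y X) = vcomp C (msrc C Y) (msrc C X)" using dcD(5)[OF dc] by blast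
  have mtc: "\<And>X Y. X\<in>TM C \<Longrightarrow> Y\<in>TM C \<Longrightarrow> mdom C Y = mcod C X \<Longrightarrow>
        mtgt C (mcomp C Y X) = vcomp C (mtgt C Y) (mtgt C X)" using dcD(9)[OF dc] by blast
  have msid: "\<And>h. h\<in>HM C \<Longrightarrow> msrc C (mid C h) = vid C (hsrc C h)" using dcD(6)[OF dc] by blast
  have mtid: "\<And>h. h\<in>HM C \<Longrightarrow> mtgt C (mid C h) = vid C (htgt C h)" using dcD(10)[OF dc] by blast
  have mu: "\<And>f. f\<in>VM C \<Longrightarrow> munit C f \<in> TM C \<and> msrc C (munit C f) = f \<and> mtgt C (munit C f) = f"
    using dcD(12)[OF dc] by blast
  have mh: "\<And>X Y. X\<in>TM C \<Longrightarrow> Y\<in>TM C \<Longrightarrow> mtgt C X = msrc C Y \<Longrightarrow>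
        mhcomp C Y X \<in> TM C \<and> msrc C (mhcomp C Y X) = msrc C X
        \<and> mtgt C (mhcomp C Y X) = mtgt C Y" using dcD(16)[OF dc] by blast
  have vl: "\<And>f. f\<in>VM C \<Longrightarrow> vcomp C (vid C (vcod C f)) f = f \<and> vcomp C f (vid C (vdom C f)) = f"
    using c04 by blast
  have vidd: "\<And>a. a\<in>Ob C \<Longrightarrow> vid C a \<in> VM C \<and> vdom C (vid C a) = a \<and> vcod C (vid C a) = a"
    using c02 by blast
  have vc: "PP C (mcomp C Y X)" if XY: "X\<in>TM C" "Y\<in>TM C" "mdom C Y = mcod C X" "PP C X" "PP C Y" for X Y
  proof -
    have eqs: "msrc C (mcomp C Y X) = vcomp C (msrc C Y) (msrc C X)"
      "mtgt C (mcomp C Y X) = vcomp C (mtgt C Y) (mtgt C X)" using msc mtc XY by auto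
    have cs: "vdom C (msrc C Y) = vcod C (msrc C X)" "vdom C (mtgt C Y) = vcod C (mtgt C X)"
      using ms mt XY by auto
    have idl: "vcomp C g (vid C a) = g" if "g \<in> VM C" "vdom C g = vcod C (vid C a)" "a \<in> Ob C" for g a
      using vl[OF that(1)] vidd[OF that(3)] that by metis
    have idr: "vcomp C (vid C a) g = g" if "g \<in> VM C" "vcod C g = vdom C (vid C a)" "a \<in> Ob C" for g a
      using vl[OF that(1)] vidd[OF that(3)] that by metis
    show ?thesis
      using \<open>PP C X\<close> \<open>PP C Y\<close> unfolding PP_def is_vid_def eqs
    proof (elim disjE conjE bexE)
      fix a b c e assume "a \<in> Ob C" "msrc C X = vid C a" "b \<in> Ob C" "mtgt C X = vid C b"
        "c \<in> Ob C" "msrc C Y = vid C c" "e \<in> Ob C" "mtgt C Y = vid C e"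
      then show "((\<exists>a\<in>Ob C. vcomp C (msrc C Y) (msrc C X) = vid C a) \<and>
         (\<exists>a\<in>Ob C. vcomp C (mtgt C Y) (mtgt C X) = vid C a)) \<or>
        vcomp C (msrc C Y) (msrc C X) = vcomp C (mtgt C Y) (mtgt C X)"
        using idl[of "vid C c" a] idl[of "vid C e" b] vidd cs by metis
    next
      fix a b assume "a \<in> Ob C" "msrc C X = vid C a" "b \<in> Ob C" "mtgt C X = vid C b"
        "msrc C Y = mtgt C Y"
      then show "((\<exists>a\<in>Ob C. vcomp C (msrc C Y) (msrc C X) = vid C a) \<and>
         (\<exists>a\<in>Ob C. vcomp C (mtgt C Y) (mtgt C X) = vid C a)) \<or>
        vcomp C (msrc C Y) (msrc C X) = vcomp C (mtgt C Y) (mtgt C X)"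
        using idl[of "msrc C Y" a] idl[of "mtgt C Y" b] vidd cs ms mt XY by metis
    next
      fix c e assume "msrc C X = mtgt C X"
        "c \<in> Ob C" "msrc C Y = vid C c" "e \<in> Ob C" "mtgt C Y = vid C e"
      then show "((\<exists>a\<in>Ob C. vcomp C (msrc C Y) (msrc C X) = vid C a) \<and>
         (\<exists>a\<in>Ob C. vcomp C (mtgt C Y) (mtgt C X) = vid C a)) \<or>
        vcomp C (msrc C Y) (msrc C X) = vcomp C (mtgt C Y) (mtgt C X)"
        using idr[of "msrc C X" c] idr[of "mtgt C X" e] vidd cs ms mt XY by metis
    next
      assume "msrc C X = mtgt C X" "msrc C Y = mtgt C Y"
      then show "((\<exists>a\<in>Ob C. vcomp C (msrc C Y) (msrc C X) = vid C a) \<and>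
         (\<exists>a\<in>Ob C. vcomp C (mtgt C Y) (mtgt C X) = vid C a)) \<or>
        vcomp C (msrc C Y) (msrc C X) = vcomp C (mtgt C Y) (mtgt C X)" by simp
    qed
  qed
  have hc: "PP C (mhcomp C Y X)" if XY: "X\<in>TM C" "Y\<in>TM C" "mtgt C X = msrc C Y" "PP C X" "PP C Y" for X Y
    using mh[OF XY(1-3)] XY(3-5) unfolding PP_def by auto
  have glob: "PP C X" if "globular C X" for X using that unfolding globular_def PP_def by simp
  have invg: "PP C Y" if X: "X \<in> TM C" "globular C X" "is_minv C X Y" for X Y
  proof -
    have Y: "Y \<in> TM C" "mdom C Y = mcod C X" "mcod C Y = mdom C X"
      "mcomp C Y X = mid C (mdom C X)" "mcomp C X Y = mid C (mcod C X)"
      using X(3) unfolding is_minv_def by auto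
    have domX: "mdom C X \<in> HM C" "mcod C X \<in> HM C" using c11 X(1) by blast+
    obtain a where a: "a \<in> Ob C" "msrc C X = vid C a" using X(2) unfolding globular_def is_vid_def by blast
    obtain b where b: "b \<in> Ob C" "mtgt C X = vid C b" using X(2) unfolding globular_def is_vid_def by blast
    have "msrc C Y = vcomp C (msrc C Y) (msrc C X)"
      using a vl ms[OF Y(1)] ms[OF X(1)] vidd Y(2) by metis
    also have "\<dots> = vid C (hsrc C (mdom C X))" using msc[OF X(1) Y(1) Y(2)] Y(4) msid domX by simp
    finally have 1: "is_vid C (msrc C Y)" using hs domX unfolding is_vid_def by blast
    have "mtgt C Y = vcomp C (mtgt C Y) (mtgt C X)"
      using b vl mt[OF Y(1)] mt[OF X(1)] vidd Y(2) by metis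
    also have "\<dots> = vid C (htgt C (mdom C X))" using mtc[OF X(1) Y(1) Y(2)] Y(4) mtid domX by simp
    finally have 2: "is_vid C (mtgt C Y)" using hs domX unfolding is_vid_def by blast
    show ?thesis using 1 2 unfolding PP_def by simp
  qed
  have gl_lunit: "\<And>h. h\<in>HM C \<Longrightarrow> miso C (lunit C h) \<and> globular C (lunit C h)"
    using dcD(19)[OF dc] hs unfolding globular_def is_vid_def by blast
  have gl_runit: "\<And>h. h\<in>HM C \<Longrightarrow> miso C (runit C h) \<and> globular C (runit C h)"
    using dcD(21)[OF dc] hs unfolding globular_def is_vid_def by blast
  have gl_assoc: "\<And>g h k. g\<in>HM C \<Longrightarrow> h\<in>HM C \<Longrightarrow> k\<in>HM C \<Longrightarrow> htgt C g = hsrc C h \<Longrightarrow> htgt C h = hsrc C k \<Longrightarrow>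
        miso C (assoc C k h g) \<and> globular C (assoc C k h g)"
  proof -
    fix g h k assume a: "g\<in>HM C" "h\<in>HM C" "k\<in>HM C" "htgt C g = hsrc C h" "htgt C h = hsrc C k"
    have "miso C (assoc C k h g) \<and> msrc C (assoc C k h g) = vid C (hsrc C g)
        \<and> mtgt C (assoc C k h g) = vid C (htgt C k)" using dcD(23)[OF dc] a by blast
    then show "miso C (assoc C k h g) \<and> globular C (assoc C k h g)"
      using hs a unfolding globular_def is_vid_def by blast
  qed
  have isoM: "X \<in> M \<and> (\<exists>Y\<in>M. is_minv C X Y)" if "miso C X" "globular C X" for X
  proof -
    from that obtain Y where "X \<in> TM C" "is_minv C X Y" unfolding miso_def by blast
    moreover have "Y \<in> TM C" using calculation unfolding is_minv_def by blast
    ultimately show ?thesis using invg glob that unfolding M_def by blast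
  qed
  have sub: "sub_double_category C (Ob C) (VM C) (HM C) M"
    unfolding sub_double_category_def
  proof (intro conjI)
    show "M \<subseteq> TM C" unfolding M_def by blast
    show "\<forall>X\<in>M. mdom C X \<in> HM C \<and> mcod C X \<in> HM C \<and> msrc C X \<in> VM C \<and> mtgt C X \<in> VM C"
    proof
      fix X assume "X \<in> M"
      then have X: "X \<in> TM C" unfolding M_def by simp
      show "mdom C X \<in> HM C \<and> mcod C X \<in> HM C \<and> msrc C X \<in> VM C \<and> mtgt C X \<in> VM C"
        using c11 X ms[OF X] mt[OF X] by simp
    qed
    show "\<forall>h\<in>HM C. mid C h \<in> M"
    proof
      fix h assume h: "h \<in> HM C"
      have "mid C h \<in> TM C" using c12 h by blast
      moreover have "is_vid C (msrc C (mid C h))" "is_vid C (mtgt C (mid C h))"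
        unfolding is_vid_def using msid[OF h] mtid[OF h] hs[OF h] by auto
      ultimately show "mid C h \<in> M" unfolding M_def PP_def by blast
    qed
    show "\<forall>X\<in>M. \<forall>Y\<in>M. mdom C Y = mcod C X \<longrightarrow> mcomp C Y X \<in> M"
    proof (intro ballI impI)
      fix X Y assume "X \<in> M" "Y \<in> M" and e: "mdom C Y = mcod C X"
      then have X: "X \<in> TM C" "PP C X" and Y: "Y \<in> TM C" "PP C Y" unfolding M_def by simp_all
      have "mcomp C Y X \<in> TM C" using c13 X Y e by simp
      moreover have "PP C (mcomp C Y X)" using vc[OF X(1) Y(1) e X(2) Y(2)] .
      ultimately show "mcomp C Y X \<in> M" unfolding M_def by simp
    qed
    show "\<forall>f\<in>VM C. munit C f \<in> M"
    proof
      fix f assume "f \<in> VM C"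
      then have m1: "munit C f \<in> TM C" and m2: "msrc C (munit C f) = mtgt C (munit C f)" using mu[of f] by auto
      have "PP C (munit C f)" unfolding PP_def using m2 by (rule disjI2)
      with m1 have "munit C f \<in> TM C \<and> PP C (munit C f)" by (rule conjI)
      then show "munit C f \<in> M" unfolding M_def by (rule CollectI)
    qed
    show "\<forall>X\<in>M. \<forall>Y\<in>M. mtgt C X = msrc C Y \<longrightarrow> mhcomp C Y X \<in> M"
    proof (intro ballI impI)
      fix X Y assume "X \<in> M" "Y \<in> M" and e: "mtgt C X = msrc C Y"
      then have X: "X \<in> TM C" "PP C X" and Y: "Y \<in> TM C" "PP C Y" unfolding M_def by simp_all
      show "mhcomp C Y X \<in> M" unfolding M_def using mh[OF X(1) Y(1) e] hc[OF X(1) Y(1) e X(2) Y(2)] by simp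
    qed
    show "\<forall>h\<in>HM C. lunit C h \<in> M \<and> (\<exists>Y\<in>M. is_minv C (lunit C h) Y)"
      using gl_lunit isoM by blast
    show "\<forall>h\<in>HM C. runit C h \<in> M \<and> (\<exists>Y\<in>M. is_minv C (runit C h) Y)"
      using gl_runit isoM by blast
    show "\<forall>g\<in>HM C. \<forall>h\<in>HM C. \<forall>k\<in>HM C. htgt C g = hsrc C h \<longrightarrow> htgt C h = hsrc C k \<longrightarrow>
        assoc C k h g \<in> M \<and> (\<exists>Y\<in>M. is_minv C (assoc C k h g) Y)"
      using gl_assoc isoM by blast
    show "Ob C \<subseteq> Ob C" "VM C \<subseteq> VM C" "HM C \<subseteq> HM C" by simp_all
    show "\<forall>f\<in>VM C. vdom C f \<in> Ob C \<and> vcod C f \<in> Ob C" by (rule c01)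
    show "\<forall>a\<in>Ob C. vid C a \<in> VM C" using c02 by simp
    show "\<forall>f\<in>VM C. \<forall>g\<in>VM C. vdom C g = vcod C f \<longrightarrow> vcomp C g f \<in> VM C" using c03 by simp
    show "\<forall>h\<in>HM C. hsrc C h \<in> Ob C \<and> htgt C h \<in> Ob C" using hs by simp
    show "\<forall>a\<in>Ob C. hunit C a \<in> HM C" using dcD(11)[OF dc] by simp
    show "\<forall>h\<in>HM C. \<forall>k\<in>HM C. htgt C h = hsrc C k \<longrightarrow> hhcomp C k h \<in> HM C" using dcD(15)[OF dc] by simp
  qed
  have "{X \<in> TM C. globular C X} \<subseteq> M" unfolding M_def using glob by blast
  moreover have "Ob C \<subseteq> Ob C" "VM C \<subseteq> VM C" "HM C \<subseteq> HM C" by auto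
  ultimately have "Os = Ob C \<and> V = VM C \<and> H = HM C \<and> M = TM C"
    if "Os = Ob C" "V = VM C" "H = HM C" for Os V H
    using gg sub that unfolding globularily_generated_def by (metis (no_types, lifting))
  then have "M = TM C" by blast
  then show ?thesis using X unfolding M_def by blast
qed

theorem corollary4p5:
  fixes C :: "('o,'v,'h,'m) dcat"
  assumes "double_category C"
    and "globularily_generated C"
    and "\<Phi> \<in> TM C" and "\<Psi> \<in> TM C"
    and "mtgt C \<Phi> = msrc C \<Psi>"
  shows "globular C (mhcomp C \<Psi> \<Phi>) \<longleftrightarrow> globular C \<Phi> \<and> globular C \<Psi>"
proof -
  have e: "msrc C (mhcomp C \<Psi> \<Phi>) = msrc C \<Phi>" "mtgt C (mhcomp C \<Psi> \<Phi>) = mtgt C \<Psi>"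
    using dcD(16)[OF assms(1)] assms(3,4,5) by simp_all
  have P: "PP C \<Phi>" using all_PP assms(1,2,3) .
  show ?thesis
  proof
    assume g: "globular C (mhcomp C \<Psi> \<Phi>)"
    then have s: "is_vid C (msrc C \<Phi>)" and t: "is_vid C (mtgt C \<Psi>)"
      unfolding globular_def e by simp_all
    have m: "is_vid C (mtgt C \<Phi>)"
    proof (cases "msrc C \<Phi> = mtgt C \<Phi>")
      case True then show ?thesis using s by simp
    next
      case False then show ?thesis using P unfolding PP_def by simp
    qed
    show "globular C \<Phi> \<and> globular C \<Psi>"
      unfolding globular_def using s t m assms(5) by simp
  next
    assume "globular C \<Phi> \<and> globular C \<Psi>"
    then show "globular C (mhcomp C \<Psi> \<Phi>)" unfolding globular_def e by simp
  qed
qed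

end
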